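(* For $n\ge2$ let $\sigma_1,\sigma_2,\dots$ be independent exponential random variables, $\sigma_i$ having rate $17\,i\sqrt{\log n}$. Then for all $\alpha<1$, all $\beta<\alpha$ and any $c_3>0$, for all $n$ large enough, $$\mathbf P\Big(\sum_{i=1}^{n^\alpha}\sigma_i<1\Big)\le e^{-c_3n^\beta}.$$
   Context: The upper summation limit $n^\alpha$ is understood as $\lfloor n^\alpha\rfloor$; $\alpha$ is positive. *)

theory Defs
  imports "HOL-Probability.Probability"
begin

end

theory Submission
  imports Defs
begin


lemma mgf_exp:
  assumes P: "prob_space M" and D: "distributed M lborel X (exponential_density l)"
    and l: "0 < l" and t: "0 \<le> t"
  shows "(\<integral>\<^sup>+\<omega>. ennreal (exp (- t * X \<omega>)) \<partial>M) = ennreal (l / (l + t))"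
proof -
  have "(\<integral>\<^sup>+\<omega>. ennreal (exp (- t * X \<omega>)) \<partial>M)
      = (\<integral>\<^sup>+x. ennreal (exponential_density l x) * ennreal (exp (- t * x)) \<partial>lborel)"
    using distributed_nn_integral[OF D, of "\<lambda>x. ennreal (exp (- t * x))"] by simp
  also have "\<dots> = (\<integral>\<^sup>+x. ennreal (l / (l + t)) * ennreal (exponential_density (l + t) x * x ^ 0) \<partial>lborel)"
  proof (intro nn_integral_cong)
    fix x :: real
    have "exponential_density l x * exp (- t * x) = l / (l + t) * (exponential_density (l + t) x * x ^ 0)"
      using l t by (simp add: exponential_density_def field_simps mult_exp_exp)
    moreover have "0 \<le> exponential_density l x" "0 \<le> exponential_density (l + t) x * x ^ 0"
      using l t by (auto simp: exponential_density_def)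
    ultimately show "ennreal (exponential_density l x) * ennreal (exp (- t * x)) =
        ennreal (l / (l + t)) * ennreal (exponential_density (l + t) x * x ^ 0)"
      using l t by (simp add: ennreal_mult[symmetric])
  qed
  also have "\<dots> = ennreal (l / (l + t)) * (\<integral>\<^sup>+x. ennreal (exponential_density (l + t) x * x ^ 0) \<partial>lborel)"
    by (rule nn_integral_cmult) simp
  also have "(\<integral>\<^sup>+x. ennreal (exponential_density (l + t) x * x ^ 0) \<partial>lborel) = 1"
    using nn_integral_erlang_ith_moment[of "l + t" 0 0] l t by simp
  finally show ?thesis by simp
qed

lemma chernoff_exp:
  assumes P: "prob_space M" and ind: "prob_space.indep_vars M (\<lambda>_. borel) X I" and fin: "finite I"
    and D: "\<And>i. i \<in> I \<Longrightarrow> distributed M lborel (X i) (exponential_density (l i))"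
    and l: "\<And>i. i \<in> I \<Longrightarrow> 0 < l i" and t: "0 \<le> t"
  shows "measure M {x \<in> space M. (\<Sum>i\<in>I. X i x) < 1} \<le> exp t * (\<Prod>i\<in>I. l i / (l i + t))"
proof -
  interpret prob_space M by fact
  have meas[measurable]: "X i \<in> borel_measurable M" if "i \<in> I" for i
    using distributed_measurable[OF D[OF that]] by simp
  have Smeas: "(\<lambda>x. \<Sum>i\<in>I. X i x) \<in> borel_measurable M"
    by (intro borel_measurable_sum) (simp add: meas)
  define A where "A = {x \<in> space M. (\<Sum>i\<in>I. X i x) < 1}"
  have A: "A \<in> sets M" unfolding A_def using Smeas by measurable
  have "emeasure M A = (\<integral>\<^sup>+x. indicator A x \<partial>M)"
    using A by simp
  also have "\<dots> \<le> (\<integral>\<^sup>+x. ennreal (exp t * (\<Prod>i\<in>I. exp (- t * X i x))) \<partial>M)"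
  proof (intro nn_integral_mono)
    fix x assume x: "x \<in> space M"
    have e: "exp t * (\<Prod>i\<in>I. exp (- t * X i x)) = exp (t * (1 - (\<Sum>i\<in>I. X i x)))"
    proof -
      have "(\<Prod>i\<in>I. exp (- t * X i x)) = exp (\<Sum>i\<in>I. - t * X i x)"
        by (rule exp_sum[symmetric, OF fin])
      also have "(\<Sum>i\<in>I. - t * X i x) = - t * (\<Sum>i\<in>I. X i x)"
        by (simp add: sum_distrib_left)
      finally show ?thesis by (simp add: mult_exp_exp algebra_simps)
    qed
    show "indicator A x \<le> ennreal (exp t * (\<Prod>i\<in>I. exp (- t * X i x)))"
    proof (cases "x \<in> A")
      case True
      then have "0 \<le> t * (1 - (\<Sum>i\<in>I. X i x))" using t by (simp add: A_def)
      then have "1 \<le> exp t * (\<Prod>i\<in>I. exp (- t * X i x))" unfolding e by simp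
      then show ?thesis using True by simp
    qed simp
  qed
  also have "\<dots> = ennreal (exp t) * (\<integral>\<^sup>+x. ennreal (\<Prod>i\<in>I. exp (- t * X i x)) \<partial>M)"
    by (subst ennreal_mult) (auto intro!: nn_integral_cmult prod_nonneg)
  also have "(\<integral>\<^sup>+x. ennreal (\<Prod>i\<in>I. exp (- t * X i x)) \<partial>M) = (\<Prod>i\<in>I. \<integral>\<^sup>+x. ennreal (exp (- t * X i x)) \<partial>M)"
  proof -
    have "indep_vars (\<lambda>_. borel) (\<lambda>i x. ennreal (exp (- t * X i x))) I"
      by (rule indep_vars_compose2[OF ind]) simp
    then have "(\<integral>\<^sup>+x. (\<Prod>i\<in>I. ennreal (exp (- t * X i x))) \<partial>M) = (\<Prod>i\<in>I. \<integral>\<^sup>+x. ennreal (exp (- t * X i x)) \<partial>M)"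
      using indep_vars_nn_integral[of I "\<lambda>i x. ennreal (exp (- t * X i x))"] fin by simp
    moreover have "\<And>x. ennreal (\<Prod>i\<in>I. exp (- t * X i x)) = (\<Prod>i\<in>I. ennreal (exp (- t * X i x)))"
      by (rule prod_ennreal[symmetric]) simp
    ultimately show ?thesis by simp
  qed
  also have "\<dots> = (\<Prod>i\<in>I. ennreal (l i / (l i + t)))"
    by (intro prod.cong refl mgf_exp[OF P D l t])
  also have "\<dots> = ennreal (\<Prod>i\<in>I. l i / (l i + t))"
    by (rule prod_ennreal) (auto intro!: divide_pos_pos less_imp_le l add_pos_nonneg t)
  finally have 1: "emeasure M A \<le> ennreal (exp t) * ennreal (\<Prod>i\<in>I. l i / (l i + t))" .
  have p0: "0 < (\<Prod>i\<in>I. l i / (l i + t))"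
    by (auto intro!: prod_pos divide_pos_pos l add_pos_nonneg t)
  have "emeasure M A \<le> ennreal (exp t * (\<Prod>i\<in>I. l i / (l i + t)))"
    using 1 p0 by (subst ennreal_mult) auto
  moreover have "0 \<le> exp t * (\<Prod>i\<in>I. l i / (l i + t))"
    using p0 by simp
  ultimately show ?thesis unfolding A_def[symmetric]
    by (simp add: measure_def enn2real_leI)
qed



lemma ev_powr_ge:
  fixes e C :: real assumes e: "0 < e"
  shows "\<forall>\<^sub>F n in sequentially. C \<le> real n powr e"
proof -
  define D where "D = max 1 C"
  have D: "0 < D" "C \<le> D" unfolding D_def by auto
  have "\<forall>\<^sub>F n in sequentially. nat \<lceil>D powr (1/e)\<rceil> \<le> n" by (rule eventually_ge_at_top)
  then show ?thesis
  proof (rule eventually_mono)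
    fix n assume "nat \<lceil>D powr (1/e)\<rceil> \<le> n"
    then have "D powr (1/e) \<le> real n" by linarith
    then have "(D powr (1/e)) powr e \<le> real n powr e"
      using e by (intro powr_mono2) auto
    also have "(D powr (1/e)) powr e = D" using e D by (simp add: powr_powr)
    finally show "C \<le> real n powr e" using D by linarith
  qed
qed

lemma ev_ln_ge:
  fixes C :: real
  shows "\<forall>\<^sub>F n in sequentially. C \<le> ln (real n)"
proof -
  have "\<forall>\<^sub>F n in sequentially. nat \<lceil>exp C\<rceil> \<le> n" by (rule eventually_ge_at_top)
  then show ?thesis
  proof (rule eventually_mono)
    fix n assume "nat \<lceil>exp C\<rceil> \<le> n"
    then have "exp C \<le> real n" by linarith
    then show "C \<le> ln (real n)"
      by (metis exp_gt_zero exp_le_cancel_iff exp_ln less_le_trans)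
  qed
qed

lemma ln_telescope:
  assumes "1 \<le> k"
  shows "ln (real (k + j)) - ln (real k) \<le> (\<Sum>i\<in>{k..<k+j}. 1 / real i)"
proof (induction j)
  case 0 then show ?case by simp
next
  case (Suc j)
  have pos: "0 < real (k + j)" using assms by simp
  have "ln (real (k + Suc j)) - ln (real (k + j)) = ln ((real (k + j) + 1) / real (k + j))"
    using pos by (simp add: ln_div add.commute)
  also have "\<dots> \<le> (real (k + j) + 1) / real (k + j) - 1"
    using pos by (intro ln_le_minus_one) simp
  also have "\<dots> = 1 / real (k + j)" using pos by (simp add: field_simps)
  finally show ?case using Suc by simp
qed

lemma factor_bound:
  fixes K x :: real
  assumes "0 \<le> K" "K \<le> x"
  shows "x / (x + K) \<le> exp (- K / (2 * x))"
proof (cases "K = 0")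
  case True then show ?thesis using assms by simp
next
  case False
  then have xp: "0 < x" using assms by simp
  define y where "y = K / x"
  have y: "0 \<le> y" "y \<le> 1" using assms xp by (auto simp: y_def field_simps)
  have "1 - y/2 \<le> exp (- (y/2))" using exp_ge_add_one_self[of "- (y/2)"] by simp
  then have "exp (y/2) * (1 - y/2) \<le> 1"
    by (metis exp_minus_inverse exp_gt_zero mult_left_mono less_imp_le mult.commute)
  moreover have "1 + y \<ge> exp (y/2)"
  proof -
    have e1: "(1 + y) * (1 - y/2) - 1 = y * (1 - y) / 2" by (simp add: algebra_simps)
    have "0 \<le> y * (1 - y)" using y by simp
    then have "(1 + y) * (1 - y/2) \<ge> 1" using e1 by linarith
    then have "exp (y/2) * (1 - y/2) \<le> (1 + y) * (1 - y/2)"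
      using \<open>exp (y/2) * (1 - y/2) \<le> 1\<close> by linarith
    moreover have "0 < 1 - y/2" using y by simp
    ultimately show ?thesis by simp
  qed
  ultimately have "1 / (1 + y) \<le> 1 / exp (y/2)"
    using y by (intro divide_left_mono) auto
  moreover have "x / (x + K) = 1 / (1 + y)" using xp by (simp add: y_def field_simps)
  moreover have "exp (- K / (2 * x)) = 1 / exp (y/2)"
    by (simp add: y_def exp_minus field_simps)
  ultimately show ?thesis by simp
qed

lemma prod_bound:
  assumes k: "1 \<le> k" "k \<le> m"
  shows "(\<Prod>i\<in>{1..m}. real i / (real i + real k)) \<le> exp (- (real k / 2) * (ln (real m + 1) - ln (real k)))"
proof -
  have f01: "0 \<le> real i / (real i + real k) \<and> real i / (real i + real k) \<le> 1" for i
    by (auto simp: divide_le_eq_1)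
  have sub: "{k..m} \<subseteq> {1..m}" using k by auto
  have "(\<Prod>i\<in>{1..m}. real i / (real i + real k)) =
      (\<Prod>i\<in>{1..m} - {k..m}. real i / (real i + real k)) * (\<Prod>i\<in>{k..m}. real i / (real i + real k))"
    by (rule prod.subset_diff[OF sub]) simp
  also have "\<dots> \<le> 1 * (\<Prod>i\<in>{k..m}. real i / (real i + real k))"
    by (intro mult_right_mono prod_le_1 prod_nonneg) (auto simp: f01)
  also have "\<dots> \<le> (\<Prod>i\<in>{k..m}. exp (- real k / (2 * real i)))"
    using k factor_bound[of "real k" "real _"] by (auto intro!: prod_mono simp: f01)
  also have "\<dots> = exp (\<Sum>i\<in>{k..m}. - real k / (2 * real i))"
    by (rule exp_sum[symmetric]) simp
  also have "(\<Sum>i\<in>{k..m}. - real k / (2 * real i)) = - (real k / 2) * (\<Sum>i\<in>{k..m}. 1 / real i)"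
    by (simp add: sum_distrib_left sum_negf)
  also have "exp (- (real k / 2) * (\<Sum>i\<in>{k..m}. 1 / real i)) \<le> exp (- (real k / 2) * (ln (real m + 1) - ln (real k)))"
  proof -
    have "ln (real (k + (m + 1 - k))) - ln (real k) \<le> (\<Sum>i\<in>{k..<k + (m + 1 - k)}. 1 / real i)"
      by (rule ln_telescope) (use k in simp)
    moreover have "k + (m + 1 - k) = m + 1" using k by simp
    moreover have "{k..<m+1} = {k..m}" by auto
    ultimately have "ln (real (m + 1)) - ln (real k) \<le> (\<Sum>i\<in>{k..m}. 1 / real i)" by metis
    then have "ln (real m + 1) - ln (real k) \<le> (\<Sum>i\<in>{k..m}. 1 / real i)" by (simp add: add.commute)
    then show ?thesis by (intro exp_le_cancel_iff[THEN iffD2] mult_left_mono_neg) auto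
  qed
  finally show ?thesis .
qed


theorem mainTheorem8:
  fixes M :: "'a measure" and \<sigma> :: "nat \<Rightarrow> nat \<Rightarrow> 'a \<Rightarrow> real"
  assumes "prob_space M"
    and "\<And>n. n \<ge> 2 \<Longrightarrow> prob_space.indep_vars M (\<lambda>_. borel) (\<sigma> n) {1..}"
    and "\<And>n i. n \<ge> 2 \<Longrightarrow> i \<ge> 1 \<Longrightarrow>
           distributed M lborel (\<sigma> n i) (exponential_density (17 * real i * sqrt (ln (real n))))"
  shows "\<forall>\<alpha> \<beta> c\<^sub>3. 0 < \<alpha> \<longrightarrow> \<alpha> < 1 \<longrightarrow> \<beta> < \<alpha> \<longrightarrow> 0 < c\<^sub>3 \<longrightarrow>
           (\<forall>\<^sub>F n in sequentially.
              measure M {x \<in> space M. (\<Sum>i=1..nat \<lfloor>real n powr \<alpha>\<rfloor>. \<sigma> n i x) < 1}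
                \<le> exp (- c\<^sub>3 * real n powr \<beta>))"
proof (intro allI impI)
  fix \<alpha> \<beta> c :: real
  assume a0: "0 < \<alpha>" and a1: "\<alpha> < 1" and ab: "\<beta> < \<alpha>" and c0: "0 < c"
  interpret P: prob_space M by fact
  define b where "b = max \<beta> 0"
  define \<mu> where "\<mu> = (\<alpha> + b) / 2"
  define d where "d = \<alpha> - \<mu>"
  have mu0: "0 < \<mu>" and d0: "0 < d" and mub: "0 < \<mu> - \<beta>"
    using a0 ab by (auto simp: \<mu>_def d_def b_def)
  have ev: "\<forall>\<^sub>F n in sequentially. max 1 ((37 / d)\<^sup>2) \<le> ln (real n) \<and> 2 \<le> real n powr \<alpha>
      \<and> 2 \<le> real n powr \<mu> \<and> 2 * c \<le> real n powr (\<mu> - \<beta>)"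
    by (intro eventually_conj ev_ln_ge ev_powr_ge a0 mu0 mub)
  show "\<forall>\<^sub>F n in sequentially.
              measure M {x \<in> space M. (\<Sum>i=1..nat \<lfloor>real n powr \<alpha>\<rfloor>. \<sigma> n i x) < 1}
                \<le> exp (- c * real n powr \<beta>)"
  proof (rule eventually_mono[OF ev])
    fix n :: nat
    assume H: "max 1 ((37 / d)\<^sup>2) \<le> ln (real n) \<and> 2 \<le> real n powr \<alpha>
      \<and> 2 \<le> real n powr \<mu> \<and> 2 * c \<le> real n powr (\<mu> - \<beta>)"
    define x where "x = real n"
    define L where "L = ln x"
    define s where "s = sqrt L"
    have L1: "1 \<le> L" and Ld: "(37 / d)\<^sup>2 \<le> L" using H by (auto simp: L_def x_def)
    have x1: "1 < x"
    proof (rule ccontr)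
      assume "\<not> 1 < x"
      then have "x \<le> 1" by simp
      moreover have "0 \<le> x" by (simp add: x_def)
      ultimately have "L \<le> 0" unfolding L_def by (cases "x = 0") auto
      then show False using L1 by simp
    qed
    have n2: "2 \<le> n" using x1 by (simp add: x_def)
    have s1: "1 \<le> s" using L1 by (simp add: s_def)
    have sd: "37 / d \<le> s" using Ld by (simp add: s_def real_le_rsqrt)
    have ss: "s * s = L" using L1 by (simp add: s_def)
    have "37 \<le> d * s" using sd d0 by (simp add: pos_divide_le_eq mult.commute)
    then have "37 * s \<le> d * s * s" using s1 by (intro mult_right_mono) auto
    then have dL: "36 * s + ln 2 \<le> d * L" using ss s1 ln_2_less_1 by (simp add: mult.assoc)
    have xa: "x powr \<alpha> = exp (\<alpha> * L)" and xm: "x powr \<mu> = exp (\<mu> * L)"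
      using x1 by (simp_all add: powr_def L_def mult.commute)
    have key: "2 * x powr \<mu> * exp (36 * s) \<le> x powr \<alpha>"
    proof -
      have "2 * x powr \<mu> * exp (36 * s) = exp (\<mu> * L + 36 * s + ln 2)"
        by (simp add: xm exp_add)
      also have "\<dots> \<le> exp (\<alpha> * L)" using dL by (simp add: d_def algebra_simps)
      finally show ?thesis by (simp add: xa)
    qed
    define m where "m = nat \<lfloor>x powr \<alpha>\<rfloor>"
    define k where "k = nat \<lfloor>x powr \<mu>\<rfloor>"
    have m_ge: "x powr \<alpha> - 1 \<le> real m" unfolding m_def by linarith
    have k_ge: "x powr \<mu> - 1 \<le> real k" unfolding k_def by linarith
    have k_le: "real k \<le> x powr \<mu>" unfolding k_def by simp
    have xa2: "2 \<le> x powr \<alpha>" and xm2: "2 \<le> x powr \<mu>" and xmb: "2 * c \<le> x powr (\<mu> - \<beta>)"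
      using H by (simp_all add: x_def)
    have mk: "real k * exp (36 * s) \<le> real m"
    proof -
      have "real k * exp (36 * s) \<le> x powr \<mu> * exp (36 * s)" using k_le by simp
      also have "\<dots> \<le> x powr \<alpha> / 2" using key by simp
      also have "\<dots> \<le> real m" using m_ge xa2 by simp
      finally show ?thesis .
    qed
    have k1: "1 \<le> real k" using k_ge xm2 by simp
    have kc: "c * x powr \<beta> \<le> real k"
    proof -
      have "x powr \<mu> = x powr (\<mu> - \<beta>) * x powr \<beta>" using x1 by (simp add: powr_add[symmetric])
      also have "\<dots> \<ge> 2 * c * x powr \<beta>" using xmb by (intro mult_right_mono) auto
      finally have "2 * c * x powr \<beta> \<le> x powr \<mu>" .
      then show ?thesis using k_ge xm2 by simp
    qed
    have e36: "1 \<le> exp (36 * s)" using s1 by simp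
    have "real k \<le> real k * exp (36 * s)" using e36 k1 by simp
    then have "real k \<le> real m" using mk by linarith
    then have km: "k \<le> m" by simp
    have kpos: "1 \<le> k" using k1 by simp
    have lnmk: "36 * s \<le> ln (real m + 1) - ln (real k)"
    proof -
      have "ln (real k * exp (36 * s)) \<le> ln (real m)" using mk k1 by (intro ln_mono) auto
      then have "ln (real k) + 36 * s \<le> ln (real m)" using k1 by (simp add: ln_mult)
      moreover have "ln (real m) \<le> ln (real m + 1)" using km kpos by (intro ln_mono) auto
      ultimately show ?thesis by simp
    qed
    have sp: "0 < s" using s1 by simp
    define l where "l i = 17 * real i * s" for i :: nat
    define t where "t = 17 * s * real k"
    have ind: "prob_space.indep_vars M (\<lambda>_. borel) (\<sigma> n) {1..m}"
      using P.indep_vars_subset[OF assms(2)[OF n2]] by auto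
    have D: "\<And>i. i \<in> {1..m} \<Longrightarrow> distributed M lborel (\<sigma> n i) (exponential_density (l i))"
      using assms(3)[OF n2] by (simp add: l_def s_def L_def x_def)
    have lpos: "\<And>i. i \<in> {1..m} \<Longrightarrow> 0 < l i" using sp by (simp add: l_def)
    have t0: "0 \<le> t" using sp by (simp add: t_def)
    have "measure M {y \<in> space M. (\<Sum>i\<in>{1..m}. \<sigma> n i y) < 1} \<le> exp t * (\<Prod>i\<in>{1..m}. l i / (l i + t))"
      by (rule chernoff_exp[OF assms(1) ind _ D lpos t0]) simp
    also have "(\<Prod>i\<in>{1..m}. l i / (l i + t)) = (\<Prod>i\<in>{1..m}. real i / (real i + real k))"
    proof (rule prod.cong[OF refl])
      fix i assume "i \<in> {1..m}"
      have "l i + t = 17 * s * (real i + real k)" by (simp add: l_def t_def algebra_simps)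
      then show "l i / (l i + t) = real i / (real i + real k)" using sp by (simp add: l_def)
    qed
    also have "exp t * \<dots> \<le> exp t * exp (- (real k / 2) * (ln (real m + 1) - ln (real k)))"
      by (intro mult_left_mono prod_bound kpos km) simp
    also have "\<dots> \<le> exp t * exp (- (real k / 2) * (36 * s))"
      using lnmk k1 by (intro mult_left_mono) (auto intro!: mult_left_mono_neg)
    also have "\<dots> = exp (t + (- (real k / 2) * (36 * s)))"
      by (simp add: mult_exp_exp)
    also have "\<dots> = exp (- (s * real k))"
      by (rule arg_cong[where f=exp]) (simp add: t_def algebra_simps)
    also have "\<dots> \<le> exp (- real k)" using s1 k1
      by (simp add: mult_le_cancel_right1 mult_right_mono)
    also have "\<dots> \<le> exp (- c * x powr \<beta>)" using kc by simp
    finally show "measure M {y \<in> space M. (\<Sum>i=1..nat \<lfloor>real n powr \<alpha>\<rfloor>. \<sigma> n i y) < 1}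
                \<le> exp (- c * real n powr \<beta>)"
      by (simp add: m_def x_def)
  qed
qed

end
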